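(* Let $k\ge1$, $m\ge1$, $h\ge0$ be fixed integers. For the random key graph $G(n,X_n,Y_n)$ with $X_n\ge2$ for all large $n$ and edge probability $q_n=\frac{\ln n+(k-1)\ln\ln n+\alpha_n}{n}$ with $\alpha_n=o(\ln n)$, let $N_i$ ($1\le i\le m$) be the set of nodes in $\{v_{m+1},\dots,v_n\}$ adjacent to $v_i$. Let $P_a$ be the probability of the event that (a) $S_i\cap S_j=\emptyset$ for all $1\le i<j\le m$, (b) $N_i\cap N_j=\emptyset$ for all $1\le i<j\le m$, and (c) $|N_i|=h$ for all $1\le i\le m$. Then $$P_a\sim (h!)^{-m}(nq_n)^{hm}e^{-mnq_n}\quad(n\to\infty).$$
   Context: The random key graph $G(n,X_n,Y_n)$ (with $1\le X_n\le Y_n$ integers depending on $n$) has node set $\{v_1,\dots,v_n\}$; each node $v_i$ is independently assigned a set $S_i$ of $X_n$ distinct objects chosen uniformly at random among all $X_n$-element subsets of a pool of $Y_n$ objects; an undirected edge joins $v_i$ and $v_j$ ($i\ne j$) iff $S_i\cap S_j\neq\emptyset$. The edge probability is $q_n=1-\binom{Y_n-X_n}{X_n}/\binom{Y_n}{X_n}$. $x_n\sim y_n$ means $x_n/y_n\to1$. *)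

theory Defs
  imports "HOL-Probability.Probability" "HOL-Library.Landau_Symbols"
begin

text \<open>Nodes v_1..v_n are indexed by 0..n-1 (v_i is index i-1);
  the key pool is {0..<Y}. A sample is a key assignment S with S i an X-subset of the pool
  for i < n; all assignments are equally likely (independent uniform choices).\<close>

definition key_sets :: "nat \<Rightarrow> nat \<Rightarrow> nat set set" where
  "key_sets X Y = {A. A \<subseteq> {..<Y} \<and> card A = X}"

definition key_space :: "nat \<Rightarrow> nat \<Rightarrow> nat \<Rightarrow> (nat \<Rightarrow> nat set) set" where
  "key_space n X Y = PiE {..<n} (\<lambda>_. key_sets X Y)"

definition rkg_dist :: "nat \<Rightarrow> nat \<Rightarrow> nat \<Rightarrow> (nat \<Rightarrow> nat set) pmf" where
  "rkg_dist n X Y = pmf_of_set (key_space n X Y)"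

definition rkg_edge_prob :: "nat \<Rightarrow> nat \<Rightarrow> real" where
  "rkg_edge_prob X Y = 1 - real ((Y - X) choose X) / real (Y choose X)"

text \<open>N_i: nodes among v_{m+1},...,v_n (indices m..n-1) adjacent to v_i (index i).\<close>
definition rkg_nbhd :: "nat \<Rightarrow> nat \<Rightarrow> (nat \<Rightarrow> nat set) \<Rightarrow> nat \<Rightarrow> nat set" where
  "rkg_nbhd n m S i = {j \<in> {m..<n}. S i \<inter> S j \<noteq> {}}"

definition rkg_event :: "nat \<Rightarrow> nat \<Rightarrow> nat \<Rightarrow> (nat \<Rightarrow> nat set) set" where
  "rkg_event n m h = {S.
      (\<forall>i<m. \<forall>j<m. i < j \<longrightarrow> S i \<inter> S j = {}) \<and>
      (\<forall>i<m. \<forall>j<m. i < j \<longrightarrow> rkg_nbhd n m S i \<inter> rkg_nbhd n m S j = {}) \<and>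
      (\<forall>i<m. card (rkg_nbhd n m S i) = h)}"

end

theory Submission
  imports Defs "HOL-Real_Asymp.Real_Asymp"
begin

lemma finite_key_sets: "finite (key_sets X Y)"
  unfolding key_sets_def by (rule finite_subset[of _ "Pow {..<Y}"]) auto

lemma card_key_sets: "card (key_sets X Y) = Y choose X"
  unfolding key_sets_def using n_subsets[of "{..<Y}" X] by simp

definition avoid :: "nat \<Rightarrow> nat \<Rightarrow> nat set \<Rightarrow> nat set set" where
  "avoid X Y U = {B \<in> key_sets X Y. B \<inter> U = {}}"

lemma finite_avoid: "finite (avoid X Y U)"
  unfolding avoid_def using finite_key_sets by auto

lemma card_avoid:
  assumes "U \<subseteq> {..<Y}"
  shows "card (avoid X Y U) = (Y - card U) choose X"
proof -
  have fU: "finite U" using assms finite_subset by blast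
  have "avoid X Y U = {B. B \<subseteq> {..<Y} - U \<and> card B = X}"
    unfolding avoid_def key_sets_def by auto
  moreover have "card ({..<Y} - U) = Y - card U"
    using assms fU by (simp add: card_Diff_subset)
  ultimately show ?thesis using n_subsets[of "{..<Y} - U" X] by simp
qed

lemma choose_prod: "(n choose k) * fact k = (\<Prod>i<k. n - i)"
proof (induction k)
  case 0 then show ?case by simp
next
  case (Suc k)
  have "(n choose Suc k) * fact (Suc k) = ((n choose Suc k) * Suc k) * fact k"
    by (simp add: algebra_simps)
  also have "(n choose Suc k) * Suc k = (n choose k) * (n - k)"
    by (metis binomial_absorb_comp binomial_absorption mult.commute)
  finally show ?case using Suc by (simp add: algebra_simps)
qed

lemma nat_sub_ineq: "((z::nat) - a - b) * z \<le> (z - a) * (z - b)"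
proof (cases "a + b \<le> z")
  case True
  then obtain w where "z = a + b + w" by (metis le_Suc_ex)
  then show ?thesis by (simp add: algebra_simps)
next
  case False then show ?thesis by simp
qed

lemma choose_submult:
  "((Y - a - b) choose X) * (Y choose X) \<le> ((Y - a) choose X) * ((Y - b) choose X)"
proof -
  have "((Y - a - b) choose X) * (Y choose X) * (fact X * fact X)
     = (\<Prod>i<X. (Y - a - b) - i) * (\<Prod>i<X. Y - i)"
    by (metis choose_prod mult.assoc mult.left_commute)
  also have "\<dots> = (\<Prod>i<X. (Y - i - a - b) * (Y - i))"
    unfolding prod.distrib[symmetric] by (intro arg_cong2[where f="(*)"] prod.cong) auto
  also have "\<dots> \<le> (\<Prod>i<X. (Y - i - a) * (Y - i - b))"
    by (intro prod_mono conjI zero_le nat_sub_ineq)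
  also have "\<dots> = (\<Prod>i<X. (Y - a) - i) * (\<Prod>i<X. (Y - b) - i)"
    unfolding prod.distrib[symmetric] by (intro prod.cong) (auto simp: add.commute)
  also have "\<dots> = ((Y - a) choose X) * ((Y - b) choose X) * (fact X * fact X)"
    by (metis choose_prod mult.assoc mult.left_commute)
  finally show ?thesis by simp
qed

lemma choose_union:
  assumes "a + b \<le> Y"
  shows "((Y - a) choose X) + ((Y - b) choose X) \<le> ((Y - a - b) choose X) + (Y choose X)"
proof -
  let ?A = "avoid X Y {..<a}" and ?B = "avoid X Y {a..<a+b}"
  have cA: "card ?A = (Y - a) choose X" using assms by (subst card_avoid) auto
  have cB: "card ?B = (Y - b) choose X" using assms by (subst card_avoid) auto
  have "?A \<inter> ?B = avoid X Y {..<a+b}"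
  proof (intro equalityI subsetI)
    fix B assume "B \<in> ?A \<inter> ?B"
    hence "B \<inter> ({..<a} \<union> {a..<a+b}) = {}" "B \<in> key_sets X Y" unfolding avoid_def by auto
    moreover have "{..<a} \<union> {a..<a+b} = {..<a+b}" by auto
    ultimately show "B \<in> avoid X Y {..<a+b}" unfolding avoid_def by auto
  qed (auto simp: avoid_def)
  hence cAB: "card (?A \<inter> ?B) = (Y - a - b) choose X" using assms card_avoid[of "{..<a+b}" Y X] by simp
  have "?A \<union> ?B \<subseteq> key_sets X Y" unfolding avoid_def by auto
  hence "card (?A \<union> ?B) \<le> Y choose X"
    using card_mono[OF finite_key_sets] card_key_sets by metis
  moreover have "card (?A \<union> ?B) + card (?A \<inter> ?B) = card ?A + card ?B"
    using card_Un_Int[OF finite_avoid finite_avoid] by simp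
  ultimately show ?thesis using cA cB cAB by linarith
qed

lemma card_label:
  assumes D: "finite D" and K: "\<And>j. j \<in> D \<Longrightarrow> finite (Kf j)" and L: "finite L" "L \<subseteq> extensional D"
  shows "card {S \<in> PiE D Kf. (\<lambda>j\<in>D. lab j (S j)) \<in> L}
       = (\<Sum>l\<in>L. \<Prod>j\<in>D. card {B \<in> Kf j. lab j B = l j})"
proof -
  have eq: "{S \<in> PiE D Kf. (\<lambda>j\<in>D. lab j (S j)) \<in> L}
      = (\<Union>l\<in>L. PiE D (\<lambda>j. {B \<in> Kf j. lab j B = l j}))"
  proof (intro equalityI subsetI)
    fix S assume S: "S \<in> {S \<in> PiE D Kf. (\<lambda>j\<in>D. lab j (S j)) \<in> L}"
    hence "S \<in> PiE D (\<lambda>j. {B \<in> Kf j. lab j B = (\<lambda>j\<in>D. lab j (S j)) j})" by auto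
    with S show "S \<in> (\<Union>l\<in>L. PiE D (\<lambda>j. {B \<in> Kf j. lab j B = l j}))" by blast
  next
    fix S assume "S \<in> (\<Union>l\<in>L. PiE D (\<lambda>j. {B \<in> Kf j. lab j B = l j}))"
    then obtain l where l: "l \<in> L" "S \<in> PiE D (\<lambda>j. {B \<in> Kf j. lab j B = l j})" by blast
    have "(\<lambda>j\<in>D. lab j (S j)) = l"
    proof
      fix j show "(\<lambda>j\<in>D. lab j (S j)) j = l j"
        using l L(2) by (cases "j \<in> D") (auto simp: extensional_def)
    qed
    with l show "S \<in> {S \<in> PiE D Kf. (\<lambda>j\<in>D. lab j (S j)) \<in> L}" by auto
  qed
  have "card (\<Union>l\<in>L. PiE D (\<lambda>j. {B \<in> Kf j. lab j B = l j}))
      = (\<Sum>l\<in>L. card (PiE D (\<lambda>j. {B \<in> Kf j. lab j B = l j})))"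
  proof (rule card_UN_disjoint)
    show "finite L" by fact
    show "\<forall>i\<in>L. finite (PiE D (\<lambda>j. {B \<in> Kf j. lab j B = i j}))"
      using D K by (auto intro!: finite_PiE)
    show "\<forall>i\<in>L. \<forall>j\<in>L. i \<noteq> j \<longrightarrow> PiE D (\<lambda>ja. {B \<in> Kf ja. lab ja B = i ja}) \<inter>
                PiE D (\<lambda>ja. {B \<in> Kf ja. lab ja B = j ja}) = {}"
    proof (intro ballI impI)
      fix l1 l2 assume l: "l1 \<in> L" "l2 \<in> L" "l1 \<noteq> l2"
      show "PiE D (\<lambda>ja. {B \<in> Kf ja. lab ja B = l1 ja}) \<inter> PiE D (\<lambda>ja. {B \<in> Kf ja. lab ja B = l2 ja}) = {}"
      proof (rule ccontr)
        assume "\<not> ?thesis"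
        then obtain S where S: "S \<in> PiE D (\<lambda>ja. {B \<in> Kf ja. lab ja B = l1 ja})"
            "S \<in> PiE D (\<lambda>ja. {B \<in> Kf ja. lab ja B = l2 ja})" by blast
        have "l1 = l2"
        proof
          fix j show "l1 j = l2 j"
          proof (cases "j \<in> D")
            case True
            have "S j \<in> Kf j \<and> lab j (S j) = l1 j" using PiE_mem[OF S(1) True] by (simp only: mem_Collect_eq)
            hence a1: "lab j (S j) = l1 j" by (rule conjunct2)
            have "S j \<in> Kf j \<and> lab j (S j) = l2 j" using PiE_mem[OF S(2) True] by (simp only: mem_Collect_eq)
            hence a2: "lab j (S j) = l2 j" by (rule conjunct2)
            show ?thesis using a1 a2 by (rule subst)
          next
            case False
            have e1: "l1 \<in> extensional D" using l(1) L(2) by (rule subsetD[rotated])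
            have e2: "l2 \<in> extensional D" using l(2) L(2) by (rule subsetD[rotated])
            show ?thesis using extensional_arb[OF e1 False] extensional_arb[OF e2 False] by simp
          qed
        qed
        with l show False by simp
      qed
    qed
  qed
  also have "\<dots> = (\<Sum>l\<in>L. \<Prod>j\<in>D. card {B \<in> Kf j. lab j B = l j})"
    using D by (simp add: card_PiE)
  finally show ?thesis using eq by simp
qed

definition Lset :: "nat \<Rightarrow> nat set \<Rightarrow> nat set \<Rightarrow> (nat \<Rightarrow> nat set) set" where
  "Lset h J I = {l \<in> PiE J (\<lambda>_. {V. V \<subseteq> I \<and> card V \<le> 1}). \<forall>i\<in>I. card {j\<in>J. i \<in> l j} = h}"

fun Mf :: "nat \<Rightarrow> nat \<Rightarrow> nat \<Rightarrow> nat" where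
  "Mf h N 0 = 1"
| "Mf h N (Suc k) = (N choose h) * Mf h (N - h) k"

lemma card_le1_mem: "card V \<le> 1 \<Longrightarrow> finite V \<Longrightarrow> i \<in> V \<Longrightarrow> V = {i}"
  by (metis card_1_singletonE card_0_eq empty_iff le_SucE le_zero_eq One_nat_def singletonD)

lemma card_le1_mem': "card V \<le> 1 \<Longrightarrow> V \<subseteq> A \<Longrightarrow> finite A \<Longrightarrow> i \<in> V \<Longrightarrow> V = {i}"
  using card_le1_mem finite_subset by metis

lemma card_Lset:
  assumes "finite I" "finite J"
  shows "card (Lset h J I) = Mf h (card J) (card I)"
  using assms
proof (induction I arbitrary: J rule: finite_induct)
  case empty
  have e: "{V. V \<subseteq> {} \<and> card V \<le> 1} = {{}}" by auto
  have "Lset h J {} = PiE J (\<lambda>_. {V. V \<subseteq> {} \<and> card V \<le> 1})" unfolding Lset_def by blast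
  hence "Lset h J {} = PiE J (\<lambda>_. {{}})" by (simp only: e)
  then show ?case using empty by (simp add: card_PiE)
next
  case (insert i0 I J)
  let ?P = "\<lambda>F. {l \<in> Lset h J (insert i0 I). {j\<in>J. i0 \<in> l j} = F}"
  let ?Fs = "{F. F \<subseteq> J \<and> card F = h}"
  have fI: "finite (insert i0 I)" using insert by simp
  have eq: "Lset h J (insert i0 I) = (\<Union>F\<in>?Fs. ?P F)"
    unfolding Lset_def by auto
  have cP: "card (?P F) = Mf h (card J - h) (card I)" if F: "F \<in> ?Fs" for F
  proof -
    have FJ: "F \<subseteq> J" "card F = h" using F by auto
    have fF: "finite F" using FJ insert.prems finite_subset by blast
    let ?f = "\<lambda>l. restrict l (J - F)"
    let ?g = "\<lambda>g j. if j \<in> F then {i0} else g j"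
    have bij: "bij_betw ?f (?P F) (Lset h (J - F) I)"
    proof (rule bij_betw_byWitness[where f' = ?g])
      show "\<forall>l\<in>?P F. ?g (?f l) = l"
      proof
        fix l assume l: "l \<in> ?P F"
        show "?g (?f l) = l"
        proof
          fix j
          show "?g (?f l) j = l j"
          proof (cases "j \<in> F")
            case True
            then have "i0 \<in> l j" "j \<in> J" using l by auto
            moreover have "card (l j) \<le> 1" "l j \<subseteq> insert i0 I"
              using l \<open>j \<in> J\<close> unfolding Lset_def by auto
            ultimately have "l j = {i0}" using fI card_le1_mem' by metis
            then show ?thesis using True by simp
          next
            case False
            then show ?thesis using l unfolding Lset_def by (auto simp: PiE_def extensional_def)
          qed
        qed
      qed
      show "\<forall>g\<in>Lset h (J - F) I. ?f (?g g) = g"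
        by (auto simp: Lset_def PiE_def extensional_def restrict_def fun_eq_iff)
      show "?f ` ?P F \<subseteq> Lset h (J - F) I"
      proof
        fix g assume "g \<in> ?f ` ?P F"
        then obtain l where l: "l \<in> ?P F" "g = ?f l" by blast
        have lF: "l j = {i0}" if "j \<in> F" for j
        proof -
          have "i0 \<in> l j" "j \<in> J" using l that by auto
          moreover have "card (l j) \<le> 1" "l j \<subseteq> insert i0 I"
            using l \<open>j \<in> J\<close> unfolding Lset_def by auto
          ultimately show "l j = {i0}" using fI card_le1_mem' by metis
        qed
        have vals: "\<forall>j\<in>J - F. l j \<subseteq> I \<and> card (l j) \<le> 1"
          using l unfolding Lset_def by auto
        have cnt: "card {j\<in>J - F. i \<in> g j} = h" if "i \<in> I" for i
        proof -
          have "{j\<in>J - F. i \<in> g j} = {j\<in>J. i \<in> l j}"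
            using l(2) lF that insert.hyps(2) by auto
          then show ?thesis using l that unfolding Lset_def by auto
        qed
        show "g \<in> Lset h (J - F) I"
          unfolding Lset_def using vals cnt l(2) by auto
      qed
      show "?g ` Lset h (J - F) I \<subseteq> ?P F"
      proof
        fix l assume "l \<in> ?g ` Lset h (J - F) I"
        then obtain g where g: "g \<in> Lset h (J - F) I" "l = ?g g" by blast
        have gv: "\<forall>j\<in>J - F. g j \<subseteq> I \<and> card (g j) \<le> 1" "\<forall>j. j \<notin> J - F \<longrightarrow> g j = undefined"
          using g unfolding Lset_def by (auto simp: PiE_def extensional_def)
        have fib: "{j\<in>J. i0 \<in> l j} = F"
          using g(2) gv FJ insert.hyps(2) by auto
        have cnt: "card {j\<in>J. i \<in> l j} = h" if "i \<in> insert i0 I" for i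
        proof (cases "i = i0")
          case True then show ?thesis using fib FJ by simp
        next
          case False
          then have "{j\<in>J. i \<in> l j} = {j\<in>J - F. i \<in> g j}" using g(2) by auto
          then show ?thesis using g False that unfolding Lset_def by auto
        qed
        have "l \<in> PiE J (\<lambda>_. {V. V \<subseteq> insert i0 I \<and> card V \<le> 1})"
        proof (rule PiE_I)
          fix j assume j: "j \<in> J"
          show "l j \<in> {V. V \<subseteq> insert i0 I \<and> card V \<le> 1}"
          proof (cases "j \<in> F")
            case True then show ?thesis using g(2) by simp
          next
            case False then show ?thesis using g(2) gv(1) j by auto
          qed
        next
          fix j assume "j \<notin> J"
          then show "l j = undefined" using g(2) gv(2) FJ by auto
        qed
        then show "l \<in> ?P F" using cnt fib unfolding Lset_def by auto
      qed
    qed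
    have "card (?P F) = card (Lset h (J - F) I)" using bij bij_betw_same_card by blast
    also have "\<dots> = Mf h (card (J - F)) (card I)" using insert.IH insert.prems by simp
    also have "card (J - F) = card J - h" using FJ fF by (simp add: card_Diff_subset)
    finally show ?thesis .
  qed
  have "card (\<Union>F\<in>?Fs. ?P F) = (\<Sum>F\<in>?Fs. card (?P F))"
  proof (rule card_UN_disjoint)
    show "finite ?Fs" using insert.prems by simp
    show "\<forall>F\<in>?Fs. finite (?P F)"
    proof
      fix F
      have "?P F \<subseteq> PiE J (\<lambda>_. Pow (insert i0 I))" unfolding Lset_def by auto
      moreover have "finite (PiE J (\<lambda>_. Pow (insert i0 I)))"
        using insert.prems fI by (intro finite_PiE) auto
      ultimately show "finite (?P F)" using finite_subset by blast
    qed
  qed auto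
  also have "\<dots> = (\<Sum>F\<in>?Fs. Mf h (card J - h) (card I))" using cP by simp
  also have "\<dots> = (card J choose h) * Mf h (card J - h) (card I)"
    using n_subsets[OF insert.prems] by simp
  finally show ?case using eq insert.hyps by simp
qed

definition Dis :: "nat \<Rightarrow> nat \<Rightarrow> nat \<Rightarrow> (nat \<Rightarrow> nat set) set" where
  "Dis X Y m = {T \<in> PiE {..<m} (\<lambda>_. key_sets X Y). \<forall>i<m. \<forall>j<m. i < j \<longrightarrow> T i \<inter> T j = {}}"

lemma Dis_union:
  assumes T: "T \<in> Dis X Y m" and I: "I \<subseteq> {..<m}"
  shows "card (\<Union>i\<in>I. T i) = card I * X" "(\<Union>i\<in>I. T i) \<subseteq> {..<Y}"
proof -
  have Ti: "T i \<subseteq> {..<Y} \<and> card (T i) = X" if "i \<in> I" for i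
    using T I that unfolding Dis_def key_sets_def by (auto simp: PiE_def Pi_def)
  have fI: "finite I" using I finite_subset by blast
  have "card (\<Union>i\<in>I. T i) = (\<Sum>i\<in>I. card (T i))"
  proof (rule card_UN_disjoint[OF fI])
    show "\<forall>i\<in>I. finite (T i)" using Ti finite_subset by blast
    show "\<forall>i\<in>I. \<forall>j\<in>I. i \<noteq> j \<longrightarrow> T i \<inter> T j = {}"
    proof (intro ballI impI)
      fix i j assume ij: "i \<in> I" "j \<in> I" "i \<noteq> j"
      then have "i < m" "j < m" using I by auto
      have D: "\<forall>i<m. \<forall>j<m. i < j \<longrightarrow> T i \<inter> T j = {}" using T by (simp add: Dis_def)
      then show "T i \<inter> T j = {}" using \<open>i < m\<close> \<open>j < m\<close> ij(3)
        by (metis Int_commute linorder_neqE_nat)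
    qed
  qed
  also have "\<dots> = card I * X" using Ti by simp
  finally show "card (\<Union>i\<in>I. T i) = card I * X" .
  show "(\<Union>i\<in>I. T i) \<subseteq> {..<Y}" using Ti by blast
qed

lemma finite_Dis: "finite (Dis X Y m)"
proof -
  have "finite (PiE {..<m} (\<lambda>_. key_sets X Y))" by (intro finite_PiE finite_key_sets) auto
  then show ?thesis unfolding Dis_def by auto
qed

lemma card_Dis: "card (Dis X Y m) = (\<Prod>i<m. (Y - i * X) choose X)"
proof (induction m)
  case 0
  have "Dis X Y 0 = {\<lambda>_. undefined}" unfolding Dis_def by auto
  then show ?case by simp
next
  case (Suc m)
  let ?U = "\<lambda>T. \<Union>i<m. T i"
  let ?G = "\<lambda>T. (\<lambda>B. T(m := B)) ` avoid X Y (?U T)"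
  have eq: "Dis X Y (Suc m) = (\<Union>T\<in>Dis X Y m. ?G T)"
  proof (intro equalityI subsetI)
    fix T' assume T': "T' \<in> Dis X Y (Suc m)"
    let ?T = "restrict T' {..<m}"
    have "?T \<in> Dis X Y m" using T' unfolding Dis_def by (auto simp: PiE_def Pi_def)
    moreover have "T' m \<in> avoid X Y (?U ?T)"
    proof -
      have D: "\<forall>i<Suc m. \<forall>j<Suc m. i < j \<longrightarrow> T' i \<inter> T' j = {}" "T' m \<in> key_sets X Y"
        using T' by (auto simp: Dis_def)
      have "\<forall>i<m. T' m \<inter> T' i = {}" using D(1) by (metis Int_commute lessI less_SucI)
      then show ?thesis using D(2) unfolding avoid_def by auto
    qed
    moreover have "T' = ?T(m := T' m)"
    proof
      fix j show "T' j = (?T(m := T' m)) j"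
        using T' unfolding Dis_def by (cases "j < m"; cases "j = m") (auto simp: PiE_def extensional_def)
    qed
    ultimately show "T' \<in> (\<Union>T\<in>Dis X Y m. ?G T)" by blast
  next
    fix T' assume "T' \<in> (\<Union>T\<in>Dis X Y m. ?G T)"
    then obtain T B where T: "T \<in> Dis X Y m" and B: "B \<in> avoid X Y (?U T)" and T': "T' = T(m := B)"
      by blast
    have "T' \<in> PiE {..<Suc m} (\<lambda>_. key_sets X Y)"
      using T B unfolding T' Dis_def avoid_def by (auto simp: PiE_def Pi_def extensional_def)
    moreover have "\<forall>i<Suc m. \<forall>j<Suc m. i < j \<longrightarrow> T' i \<inter> T' j = {}"
    proof (intro allI impI)
      fix i j assume "i < Suc m" "j < Suc m" "i < j"
      then show "T' i \<inter> T' j = {}"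
        using T B unfolding T' Dis_def avoid_def by (cases "j = m") auto
    qed
    ultimately show "T' \<in> Dis X Y (Suc m)" unfolding Dis_def by blast
  qed
  have "card (\<Union>T\<in>Dis X Y m. ?G T) = (\<Sum>T\<in>Dis X Y m. card (?G T))"
  proof (rule card_UN_disjoint)
    show "finite (Dis X Y m)" by (rule finite_Dis)
    show "\<forall>T\<in>Dis X Y m. finite (?G T)" using finite_avoid by blast
    show "\<forall>T1\<in>Dis X Y m. \<forall>T2\<in>Dis X Y m. T1 \<noteq> T2 \<longrightarrow> ?G T1 \<inter> ?G T2 = {}"
    proof (intro ballI impI)
      fix T1 T2 assume T: "T1 \<in> Dis X Y m" "T2 \<in> Dis X Y m" "T1 \<noteq> T2"
      show "?G T1 \<inter> ?G T2 = {}"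
      proof (rule ccontr)
        assume "?G T1 \<inter> ?G T2 \<noteq> {}"
        then obtain B1 B2 where "T1(m := B1) = T2(m := B2)" by blast
        then have "\<forall>j. j \<noteq> m \<longrightarrow> T1 j = T2 j" by (metis fun_upd_other)
        moreover have "T1 m = T2 m" using T unfolding Dis_def by (auto simp: PiE_def extensional_def)
        ultimately have "T1 = T2" by (metis ext)
        with T show False by simp
      qed
    qed
  qed
  also have "\<dots> = (\<Sum>T\<in>Dis X Y m. (Y - m * X) choose X)"
  proof (rule sum.cong[OF refl])
    fix T assume T: "T \<in> Dis X Y m"
    have "inj_on (\<lambda>B. T(m := B)) (avoid X Y (?U T))" by (rule inj_onI) (metis fun_upd_same)
    then have "card (?G T) = card (avoid X Y (?U T))" by (rule card_image)
    also have "\<dots> = (Y - m * X) choose X"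
      using Dis_union[OF T, of "{..<m}"] by (simp add: card_avoid)
    finally show "card (?G T) = (Y - m * X) choose X" .
  qed
  also have "\<dots> = card (Dis X Y m) * ((Y - m * X) choose X)" by simp
  finally show ?case using eq Suc by simp
qed

definition Kf :: "nat \<Rightarrow> nat \<Rightarrow> nat \<Rightarrow> (nat \<Rightarrow> nat set) \<Rightarrow> nat \<Rightarrow> nat set set" where
  "Kf X Y m T j = (if j < m then {T j} else key_sets X Y)"

definition labf :: "nat \<Rightarrow> (nat \<Rightarrow> nat set) \<Rightarrow> nat \<Rightarrow> nat set \<Rightarrow> nat set" where
  "labf m T j B = (if j < m then {} else {i. i < m \<and> T i \<inter> B \<noteq> {}})"

definition Lbig :: "nat \<Rightarrow> nat \<Rightarrow> nat \<Rightarrow> (nat \<Rightarrow> nat set) set" where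
  "Lbig n m h = {l \<in> PiE {..<n} (\<lambda>j. if j < m then {{}} else {V. V \<subseteq> {..<m} \<and> card V \<le> 1}).
      \<forall>i<m. card {j\<in>{m..<n}. i \<in> l j} = h}"

definition Fib :: "nat \<Rightarrow> nat \<Rightarrow> nat \<Rightarrow> nat \<Rightarrow> nat \<Rightarrow> (nat \<Rightarrow> nat set) \<Rightarrow> (nat \<Rightarrow> nat set) set" where
  "Fib n X Y m h T = {S \<in> PiE {..<n} (Kf X Y m T). (\<lambda>j\<in>{..<n}. labf m T j (S j)) \<in> Lbig n m h}"

lemma card_le1_iff: "finite V \<Longrightarrow> card V \<le> 1 \<longleftrightarrow> (\<forall>a\<in>V. \<forall>b\<in>V. a = b)"
  using card_le_Suc0_iff_eq by (metis One_nat_def)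

lemma event_decomp:
  assumes mn: "m \<le> n"
  shows "key_space n X Y \<inter> rkg_event n m h = (\<Union>T\<in>Dis X Y m. Fib n X Y m h T)"
proof (intro equalityI subsetI)
  fix S assume "S \<in> key_space n X Y \<inter> rkg_event n m h"
  then have S: "S \<in> PiE {..<n} (\<lambda>_. key_sets X Y)"
    and a: "\<forall>i<m. \<forall>j<m. i < j \<longrightarrow> S i \<inter> S j = {}"
    and b: "\<forall>i<m. \<forall>j<m. i < j \<longrightarrow> rkg_nbhd n m S i \<inter> rkg_nbhd n m S j = {}"
    and c: "\<forall>i<m. card (rkg_nbhd n m S i) = h"
    unfolding key_space_def rkg_event_def by auto
  let ?T = "restrict S {..<m}"
  have SK: "S j \<in> key_sets X Y" if "j < n" for j using S that by auto
  have T: "?T \<in> Dis X Y m" unfolding Dis_def using a SK mn by auto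
  have S1: "S \<in> PiE {..<n} (Kf X Y m ?T)"
  proof (rule PiE_I)
    fix j assume "j \<in> {..<n}" then show "S j \<in> Kf X Y m ?T j" using SK by (auto simp: Kf_def)
  next
    fix j assume "j \<notin> {..<n}" then show "S j = undefined" using S by auto
  qed
  let ?l = "\<lambda>j\<in>{..<n}. labf m ?T j (S j)"
  have lj: "?l j = {i. i < m \<and> S i \<inter> S j \<noteq> {}}" if "j \<in> {m..<n}" for j
    using that by (auto simp: labf_def)
  have card1: "card {i. i < m \<and> S i \<inter> S j \<noteq> {}} \<le> 1" if j: "j \<in> {m..<n}" for j
  proof (subst card_le1_iff)
    show "finite {i. i < m \<and> S i \<inter> S j \<noteq> {}}" by auto
    show "\<forall>a\<in>{i. i < m \<and> S i \<inter> S j \<noteq> {}}. \<forall>b\<in>{i. i < m \<and> S i \<inter> S j \<noteq> {}}. a = b"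
    proof (intro ballI)
      fix i1 i2 assume i: "i1 \<in> {i. i < m \<and> S i \<inter> S j \<noteq> {}}" "i2 \<in> {i. i < m \<and> S i \<inter> S j \<noteq> {}}"
      have "j \<in> rkg_nbhd n m S i1" "j \<in> rkg_nbhd n m S i2" using i j unfolding rkg_nbhd_def by auto
      then show "i1 = i2" using b i by (metis IntI empty_iff linorder_neqE_nat mem_Collect_eq)
    qed
  qed
  have "?l \<in> Lbig n m h"
    unfolding Lbig_def
  proof (intro CollectI conjI allI impI)
    show "?l \<in> PiE {..<n} (\<lambda>j. if j < m then {{}} else {V. V \<subseteq> {..<m} \<and> card V \<le> 1})"
    proof (rule PiE_I)
      fix j assume j: "j \<in> {..<n}"
      show "?l j \<in> (if j < m then {{}} else {V. V \<subseteq> {..<m} \<and> card V \<le> 1})"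
      proof (cases "j < m")
        case True then show ?thesis using j by (simp add: labf_def)
      next
        case False
        then have "j \<in> {m..<n}" using j by auto
        then show ?thesis using lj card1 False by auto
      qed
    qed auto
    fix i assume i: "i < m"
    have "{j\<in>{m..<n}. i \<in> ?l j} = rkg_nbhd n m S i"
      unfolding rkg_nbhd_def using lj i by (auto simp: Int_commute)
    then show "card {j\<in>{m..<n}. i \<in> ?l j} = h" using c i by simp
  qed
  then have "S \<in> Fib n X Y m h ?T" unfolding Fib_def using S1 by blast
  then show "S \<in> (\<Union>T\<in>Dis X Y m. Fib n X Y m h T)" using T by blast
next
  fix S assume "S \<in> (\<Union>T\<in>Dis X Y m. Fib n X Y m h T)"
  then obtain T where T: "T \<in> Dis X Y m" and SF: "S \<in> Fib n X Y m h T" by blast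
  have S1: "S \<in> PiE {..<n} (Kf X Y m T)" and L: "(\<lambda>j\<in>{..<n}. labf m T j (S j)) \<in> Lbig n m h"
    using SF unfolding Fib_def by auto
  have ST: "S j = T j" if "j < m" for j
    using PiE_mem[OF S1, of j] that mn by (simp add: Kf_def)
  have TK: "T j \<in> key_sets X Y" if "j < m" for j using T that unfolding Dis_def by auto
  have Sspace: "S \<in> key_space n X Y"
    unfolding key_space_def
  proof (rule PiE_I)
    fix j assume j: "j \<in> {..<n}"
    show "S j \<in> key_sets X Y"
    proof (cases "j < m")
      case True then show ?thesis using ST TK by simp
    next
      case False then show ?thesis using PiE_mem[OF S1 j] by (simp add: Kf_def)
    qed
  next
    fix j assume "j \<notin> {..<n}" then show "S j = undefined" using S1 by auto
  qed
  let ?l = "\<lambda>j\<in>{..<n}. labf m T j (S j)"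
  have lj: "?l j = {i. i < m \<and> S i \<inter> S j \<noteq> {}}" if "j \<in> {m..<n}" for j
    using that ST by (auto simp: labf_def)
  have lcard: "card (?l j) \<le> 1" if "j \<in> {m..<n}" for j
    using L that unfolding Lbig_def by (auto simp: PiE_def Pi_def)
  have cnt: "card {j\<in>{m..<n}. i \<in> ?l j} = h" if "i < m" for i
    using L that unfolding Lbig_def by auto
  have nb: "rkg_nbhd n m S i = {j\<in>{m..<n}. i \<in> ?l j}" if "i < m" for i
    unfolding rkg_nbhd_def using lj that by (auto simp: Int_commute)
  have a: "\<forall>i<m. \<forall>j<m. i < j \<longrightarrow> S i \<inter> S j = {}" using T ST unfolding Dis_def by auto
  have b: "\<forall>i<m. \<forall>j<m. i < j \<longrightarrow> rkg_nbhd n m S i \<inter> rkg_nbhd n m S j = {}"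
  proof (intro allI impI)
    fix i1 i2 assume i: "i1 < m" "i2 < m" "i1 < i2"
    show "rkg_nbhd n m S i1 \<inter> rkg_nbhd n m S i2 = {}"
    proof (rule ccontr)
      assume "rkg_nbhd n m S i1 \<inter> rkg_nbhd n m S i2 \<noteq> {}"
      then obtain j where j: "j \<in> {m..<n}" "i1 \<in> ?l j" "i2 \<in> ?l j" using nb i by blast
      have "finite (?l j)" using lj j by simp
      then have "i1 = i2" using lcard[OF j(1)] j card_le1_iff by blast
      with i show False by simp
    qed
  qed
  have c: "\<forall>i<m. card (rkg_nbhd n m S i) = h" using nb cnt by simp
  show "S \<in> key_space n X Y \<inter> rkg_event n m h"
    using Sspace a b c unfolding rkg_event_def by blast
qed

lemma card_Lbig:
  assumes mn: "m \<le> n"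
  shows "card (Lbig n m h) = Mf h (n - m) m"
proof -
  have bij: "bij_betw (\<lambda>l. restrict l {m..<n}) (Lbig n m h) (Lset h {m..<n} {..<m})"
  proof (rule bij_betw_byWitness[where f' = "\<lambda>g j. if j < m then {} else g j"])
    show "\<forall>l\<in>Lbig n m h. (\<lambda>j. if j < m then {} else restrict l {m..<n} j) = l"
    proof
      fix l assume l: "l \<in> Lbig n m h"
      show "(\<lambda>j. if j < m then {} else restrict l {m..<n} j) = l"
      proof
        fix j
        show "(if j < m then {} else restrict l {m..<n} j) = l j"
        proof (cases "j < m")
          case True
          have "\<forall>x<n. l x \<in> (if x < m then {{}} else {V. V \<subseteq> {..<m} \<and> card V \<le> 1})"
            using l unfolding Lbig_def by (auto simp: PiE_def Pi_def)
          then have "l j \<in> (if j < m then {{}} else {V. V \<subseteq> {..<m} \<and> card V \<le> 1})"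
            using True mn by (meson less_le_trans)
          then have "l j \<in> {{}}" using True by simp
          then show ?thesis using True by simp
        next
          case False
          then show ?thesis using l unfolding Lbig_def by (auto simp: PiE_def extensional_def)
        qed
      qed
    qed
    show "\<forall>g\<in>Lset h {m..<n} {..<m}. restrict (\<lambda>j. if j < m then {} else g j) {m..<n} = g"
      by (auto simp: Lset_def PiE_def extensional_def fun_eq_iff)
    show "(\<lambda>l. restrict l {m..<n}) ` Lbig n m h \<subseteq> Lset h {m..<n} {..<m}"
    proof
      fix g assume "g \<in> (\<lambda>l. restrict l {m..<n}) ` Lbig n m h"
      then obtain l where l: "l \<in> Lbig n m h" "g = restrict l {m..<n}" by blast
      have lv: "\<forall>x<n. l x \<in> (if x < m then {{}} else {V. V \<subseteq> {..<m} \<and> card V \<le> 1})"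
        using l(1) unfolding Lbig_def by (auto simp: PiE_def Pi_def)
      have "g \<in> PiE {m..<n} (\<lambda>_. {V. V \<subseteq> {..<m} \<and> card V \<le> 1})"
      proof (rule PiE_I)
        fix j assume j: "j \<in> {m..<n}"
        then have "j < n" "\<not> j < m" by auto
        have "l j \<in> (if j < m then {{}} else {V. V \<subseteq> {..<m} \<and> card V \<le> 1})"
          using lv \<open>j < n\<close> by blast
        then show "g j \<in> {V. V \<subseteq> {..<m} \<and> card V \<le> 1}" using \<open>\<not> j < m\<close> l(2) j by simp
      next
        fix j assume "j \<notin> {m..<n}" then show "g j = undefined" using l(2) by (simp add: restrict_def del: atLeastLessThan_iff)
      qed
      moreover have "\<forall>i\<in>{..<m}. card {j\<in>{m..<n}. i \<in> g j} = h"
      proof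
        fix i assume i: "i \<in> {..<m}"
        have "{j\<in>{m..<n}. i \<in> g j} = {j\<in>{m..<n}. i \<in> l j}" using l(2) by auto
        then show "card {j\<in>{m..<n}. i \<in> g j} = h" using l(1) i unfolding Lbig_def by auto
      qed
      ultimately show "g \<in> Lset h {m..<n} {..<m}" unfolding Lset_def by blast
    qed
    show "(\<lambda>g j. if j < m then {} else g j) ` Lset h {m..<n} {..<m} \<subseteq> Lbig n m h"
    proof
      fix l assume "l \<in> (\<lambda>g j. if j < m then {} else g j) ` Lset h {m..<n} {..<m}"
      then obtain g where g: "g \<in> Lset h {m..<n} {..<m}" "l = (\<lambda>j. if j < m then {} else g j)" by blast
      have gP: "g \<in> PiE {m..<n} (\<lambda>_. {V. V \<subseteq> {..<m} \<and> card V \<le> 1})"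
        and gc: "\<forall>i\<in>{..<m}. card {j\<in>{m..<n}. i \<in> g j} = h"
        using g unfolding Lset_def by auto
      have "l \<in> PiE {..<n} (\<lambda>j. if j < m then {{}} else {V. V \<subseteq> {..<m} \<and> card V \<le> 1})"
      proof (rule PiE_I)
        fix j assume "j \<in> {..<n}"
        then show "l j \<in> (if j < m then {{}} else {V. V \<subseteq> {..<m} \<and> card V \<le> 1})"
          using gP g(2) by (cases "j < m") (auto simp: PiE_def Pi_def)
      next
        fix j assume "j \<notin> {..<n}"
        then show "l j = undefined" using gP g(2) mn by (auto simp: PiE_def extensional_def)
      qed
      moreover have "\<forall>i<m. card {j\<in>{m..<n}. i \<in> l j} = h"
      proof (intro allI impI)
        fix i assume i: "i < m"
        have "{j\<in>{m..<n}. i \<in> l j} = {j\<in>{m..<n}. i \<in> g j}" using g(2) by auto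
        then show "card {j\<in>{m..<n}. i \<in> l j} = h" using gc i by simp
      qed
      ultimately show "l \<in> Lbig n m h" unfolding Lbig_def by blast
    qed
  qed
  have "card (Lbig n m h) = card (Lset h {m..<n} {..<m})" using bij bij_betw_same_card by blast
  also have "\<dots> = Mf h (n - m) m" by (subst card_Lset) auto
  finally show ?thesis .
qed

lemma finite_Lbig: "finite (Lbig n m h)"
proof -
  have "Lbig n m h \<subseteq> PiE {..<n} (\<lambda>_. Pow {..<m})" unfolding Lbig_def by (auto simp: PiE_def Pi_def)
  moreover have "finite (PiE {..<n} (\<lambda>_. Pow {..<m}))" by (intro finite_PiE) auto
  ultimately show ?thesis by (rule finite_subset)
qed

lemma cls0:
  assumes T: "T \<in> Dis X Y m"
  shows "card {B \<in> key_sets X Y. {i. i < m \<and> T i \<inter> B \<noteq> {}} = {}} = (Y - m * X) choose X"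
proof -
  have "{B \<in> key_sets X Y. {i. i < m \<and> T i \<inter> B \<noteq> {}} = {}} = avoid X Y (\<Union>i<m. T i)"
    unfolding avoid_def by auto
  then show ?thesis using Dis_union[OF T, of "{..<m}"] by (simp add: card_avoid)
qed

lemma cls1:
  assumes T: "T \<in> Dis X Y m" and i: "i < m"
  shows "card {B \<in> key_sets X Y. {i'. i' < m \<and> T i' \<inter> B \<noteq> {}} = {i}}
       = ((Y - (m - 1) * X) choose X) - ((Y - m * X) choose X)"
proof -
  let ?A = "avoid X Y (\<Union>i'\<in>{..<m} - {i}. T i')" and ?B = "avoid X Y (\<Union>i'<m. T i')"
  have eq: "{B \<in> key_sets X Y. {i'. i' < m \<and> T i' \<inter> B \<noteq> {}} = {i}} = ?A - ?B"
  proof (intro equalityI subsetI)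
    fix B assume "B \<in> {B \<in> key_sets X Y. {i'. i' < m \<and> T i' \<inter> B \<noteq> {}} = {i}}"
    then have B: "B \<in> key_sets X Y" "{i'. i' < m \<and> T i' \<inter> B \<noteq> {}} = {i}" by auto
    have "\<forall>i'\<in>{..<m} - {i}. T i' \<inter> B = {}" using B(2) by blast
    then have "B \<in> ?A" using B(1) unfolding avoid_def by auto
    moreover have "T i \<inter> B \<noteq> {}" using B(2) by blast
    then have "B \<notin> ?B" using i unfolding avoid_def by auto
    ultimately show "B \<in> ?A - ?B" by blast
  next
    fix B assume B: "B \<in> ?A - ?B"
    then have BK: "B \<in> key_sets X Y" and o: "\<forall>i'\<in>{..<m} - {i}. T i' \<inter> B = {}"
      unfolding avoid_def by auto
    from B have "\<exists>i'<m. T i' \<inter> B \<noteq> {}" unfolding avoid_def by auto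
    then have "T i \<inter> B \<noteq> {}" using o by auto
    then have "{i'. i' < m \<and> T i' \<inter> B \<noteq> {}} = {i}" using o i by auto
    then show "B \<in> {B \<in> key_sets X Y. {i'. i' < m \<and> T i' \<inter> B \<noteq> {}} = {i}}" using BK by auto
  qed
  have sub: "?B \<subseteq> ?A" unfolding avoid_def by auto
  have cA: "card ?A = (Y - (m - 1) * X) choose X"
    using Dis_union[OF T, of "{..<m} - {i}"] i by (simp add: card_avoid)
  have cB: "card ?B = (Y - m * X) choose X"
    using Dis_union[OF T, of "{..<m}"] by (simp add: card_avoid)
  show ?thesis using eq card_Diff_subset[OF finite_subset[OF sub finite_avoid] sub] cA cB by simp
qed

definition A0 :: "nat \<Rightarrow> nat \<Rightarrow> nat \<Rightarrow> nat" where "A0 X Y m = (Y - m * X) choose X"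
definition A1 :: "nat \<Rightarrow> nat \<Rightarrow> nat \<Rightarrow> nat" where "A1 X Y m = ((Y - (m - 1) * X) choose X) - A0 X Y m"

lemma finite_Kf: "finite (Kf X Y m T j)"
  by (simp add: Kf_def finite_key_sets)

lemma prod_Lbig:
  assumes mn: "m \<le> n" and T: "T \<in> Dis X Y m" and l: "l \<in> Lbig n m h"
  shows "(\<Prod>j<n. card {B \<in> Kf X Y m T j. labf m T j B = l j})
       = A1 X Y m ^ (h * m) * A0 X Y m ^ (n - m - h * m)"
proof -
  have lv: "\<forall>x<n. l x \<in> (if x < m then {{}} else {V. V \<subseteq> {..<m} \<and> card V \<le> 1})"
    using l unfolding Lbig_def by (auto simp: PiE_def Pi_def)
  have lhi: "l j \<subseteq> {..<m} \<and> card (l j) \<le> 1" if j: "j \<in> {m..<n}" for j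
  proof -
    have "j < n" using j by simp
    then have "l j \<in> (if j < m then {{}} else {V. V \<subseteq> {..<m} \<and> card V \<le> 1})" using lv by blast
    moreover have "\<not> j < m" using j by simp
    ultimately show ?thesis by simp
  qed
  have cnt: "\<forall>i<m. card {j\<in>{m..<n}. i \<in> l j} = h" using l unfolding Lbig_def by auto
  have split: "{..<n} = {..<m} \<union> {m..<n}" using mn by auto
  have "(\<Prod>j<n. card {B \<in> Kf X Y m T j. labf m T j B = l j})
      = (\<Prod>j<m. card {B \<in> Kf X Y m T j. labf m T j B = l j}) *
        (\<Prod>j\<in>{m..<n}. card {B \<in> Kf X Y m T j. labf m T j B = l j})"
    unfolding split by (rule prod.union_disjoint) auto
  also have "(\<Prod>j<m. card {B \<in> Kf X Y m T j. labf m T j B = l j}) = 1"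
  proof (rule prod.neutral, intro ballI)
    fix j assume j: "j \<in> {..<m}"
    then have "l j \<in> {{}}" using lv mn by (metis lessThan_iff less_le_trans)
    then have "{B \<in> Kf X Y m T j. labf m T j B = l j} = {T j}" using j by (auto simp: Kf_def labf_def)
    then show "card {B \<in> Kf X Y m T j. labf m T j B = l j} = 1" by simp
  qed
  also have "(\<Prod>j\<in>{m..<n}. card {B \<in> Kf X Y m T j. labf m T j B = l j})
      = (\<Prod>j\<in>{m..<n}. if l j = {} then A0 X Y m else A1 X Y m)"
  proof (rule prod.cong[OF refl])
    fix j assume j: "j \<in> {m..<n}"
    then have lj: "l j \<subseteq> {..<m}" "card (l j) \<le> 1" using lhi by auto
    have e: "{B \<in> Kf X Y m T j. labf m T j B = l j} = {B \<in> key_sets X Y. {i. i < m \<and> T i \<inter> B \<noteq> {}} = l j}"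
      using j by (auto simp: Kf_def labf_def)
    show "card {B \<in> Kf X Y m T j. labf m T j B = l j} = (if l j = {} then A0 X Y m else A1 X Y m)"
    proof (cases "l j = {}")
      case True then show ?thesis using e cls0[OF T] by (simp add: A0_def)
    next
      case False
      then obtain i where i: "i \<in> l j" by blast
      then have "l j = {i}" using lj card_le1_mem'[of "l j" "{..<m}" i] by simp
      moreover have "i < m" using i lj by auto
      ultimately show ?thesis using e cls1[OF T] by (simp add: A1_def A0_def)
    qed
  qed
  also have "\<dots> = (\<Prod>j\<in>{m..<n} \<inter> {j. l j = {}}. A0 X Y m) * (\<Prod>j\<in>{m..<n} \<inter> - {j. l j = {}}. A1 X Y m)"
    by (rule prod.If_cases) simp
  also have "\<dots> = A0 X Y m ^ card ({m..<n} \<inter> {j. l j = {}}) * A1 X Y m ^ card ({m..<n} \<inter> - {j. l j = {}})"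
    by simp
  also have "card ({m..<n} \<inter> - {j. l j = {}}) = h * m"
  proof -
    have eq: "{m..<n} \<inter> - {j. l j = {}} = (\<Union>i<m. {j\<in>{m..<n}. i \<in> l j})"
    proof (intro equalityI subsetI)
      fix j assume "j \<in> {m..<n} \<inter> - {j. l j = {}}"
      then have "j \<in> {m..<n}" "l j \<noteq> {}" "l j \<subseteq> {..<m}" using lhi by auto
      then show "j \<in> (\<Union>i<m. {j\<in>{m..<n}. i \<in> l j})" by blast
    qed auto
    have "card (\<Union>i<m. {j\<in>{m..<n}. i \<in> l j}) = (\<Sum>i<m. card {j\<in>{m..<n}. i \<in> l j})"
    proof (rule card_UN_disjoint)
      show "\<forall>i\<in>{..<m}. \<forall>i'\<in>{..<m}. i \<noteq> i' \<longrightarrow> {j \<in> {m..<n}. i \<in> l j} \<inter> {j \<in> {m..<n}. i' \<in> l j} = {}"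
      proof (intro ballI impI)
        fix i i' assume ii: "i \<in> {..<m}" "i' \<in> {..<m}" "i \<noteq> i'"
        show "{j \<in> {m..<n}. i \<in> l j} \<inter> {j \<in> {m..<n}. i' \<in> l j} = {}"
        proof (rule ccontr)
          assume "\<not> ?thesis"
          then obtain j where j: "j \<in> {m..<n}" "i \<in> l j" "i' \<in> l j" by blast
          then have "l j \<subseteq> {..<m}" "card (l j) \<le> 1" using lhi by auto
          then have "l j = {i}" using j card_le1_mem'[of "l j" "{..<m}" i] by simp
          with j ii show False by simp
        qed
      qed
    qed auto
    also have "\<dots> = h * m" using cnt by simp
    finally show ?thesis using eq by simp
  qed
  also have "card ({m..<n} \<inter> {j. l j = {}}) = n - m - h * m"
  proof -
    have "{m..<n} \<inter> {j. l j = {}} = {m..<n} - ({m..<n} \<inter> - {j. l j = {}})" by auto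
    then have "card ({m..<n} \<inter> {j. l j = {}}) = card {m..<n} - card ({m..<n} \<inter> - {j. l j = {}})"
      by (simp add: card_Diff_subset)
    then show ?thesis using \<open>card ({m..<n} \<inter> - {j. l j = {}}) = h * m\<close> by simp
  qed
  finally show ?thesis by (simp add: mult.commute)
qed

lemma card_Fib:
  assumes mn: "m \<le> n" and T: "T \<in> Dis X Y m"
  shows "card (Fib n X Y m h T) = Mf h (n - m) m * (A1 X Y m ^ (h * m) * A0 X Y m ^ (n - m - h * m))"
proof -
  have Lext: "Lbig n m h \<subseteq> extensional {..<n}" unfolding Lbig_def by (auto simp: PiE_def)
  have "card (Fib n X Y m h T) = (\<Sum>l\<in>Lbig n m h. \<Prod>j<n. card {B \<in> Kf X Y m T j. labf m T j B = l j})"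
    unfolding Fib_def by (rule card_label[OF _ _ finite_Lbig Lext]) (auto simp: finite_Kf)
  also have "\<dots> = (\<Sum>l\<in>Lbig n m h. A1 X Y m ^ (h * m) * A0 X Y m ^ (n - m - h * m))"
    using prod_Lbig[OF mn T] by simp
  also have "\<dots> = Mf h (n - m) m * (A1 X Y m ^ (h * m) * A0 X Y m ^ (n - m - h * m))"
    using card_Lbig[OF mn] by simp
  finally show ?thesis .
qed

lemma card_event:
  assumes mn: "m \<le> n"
  shows "card (key_space n X Y \<inter> rkg_event n m h)
     = card (Dis X Y m) * (Mf h (n - m) m * (A1 X Y m ^ (h * m) * A0 X Y m ^ (n - m - h * m)))"
proof -
  have "card (\<Union>T\<in>Dis X Y m. Fib n X Y m h T) = (\<Sum>T\<in>Dis X Y m. card (Fib n X Y m h T))"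
  proof (rule card_UN_disjoint)
    show "finite (Dis X Y m)" by (rule finite_Dis)
    show "\<forall>T\<in>Dis X Y m. finite (Fib n X Y m h T)"
    proof
      fix T
      have "finite (PiE {..<n} (Kf X Y m T))" by (intro finite_PiE finite_Kf) auto
      then show "finite (Fib n X Y m h T)" unfolding Fib_def by auto
    qed
    show "\<forall>T1\<in>Dis X Y m. \<forall>T2\<in>Dis X Y m. T1 \<noteq> T2 \<longrightarrow> Fib n X Y m h T1 \<inter> Fib n X Y m h T2 = {}"
    proof (intro ballI impI)
      fix T1 T2 assume T: "T1 \<in> Dis X Y m" "T2 \<in> Dis X Y m" "T1 \<noteq> T2"
      show "Fib n X Y m h T1 \<inter> Fib n X Y m h T2 = {}"
      proof (rule ccontr)
        assume "\<not> ?thesis"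
        then obtain S where S: "S \<in> PiE {..<n} (Kf X Y m T1)" "S \<in> PiE {..<n} (Kf X Y m T2)"
          unfolding Fib_def by blast
        have "T1 = T2"
        proof
          fix j show "T1 j = T2 j"
          proof (cases "j < m")
            case True
            then have "j \<in> {..<n}" using mn by simp
            from PiE_mem[OF S(1) this] PiE_mem[OF S(2) this] True show ?thesis by (simp add: Kf_def)
          next
            case False
            then show ?thesis using T unfolding Dis_def by (auto simp: PiE_def extensional_def)
          qed
        qed
        with T show False by simp
      qed
    qed
  qed
  also have "\<dots> = (\<Sum>T\<in>Dis X Y m. Mf h (n - m) m * (A1 X Y m ^ (h * m) * A0 X Y m ^ (n - m - h * m)))"
    using card_Fib[OF mn] by simp
  finally show ?thesis using event_decomp[OF mn] by simp
qed

lemma prob_formula: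
  assumes mn: "m \<le> n" and XY: "X \<le> Y"
  shows "measure_pmf.prob (rkg_dist n X Y) (rkg_event n m h)
     = real (card (Dis X Y m) * (Mf h (n - m) m * (A1 X Y m ^ (h * m) * A0 X Y m ^ (n - m - h * m))))
       / real (Y choose X) ^ n"
proof -
  have "{..<X} \<in> key_sets X Y" using XY unfolding key_sets_def by auto
  then have ne: "key_space n X Y \<noteq> {}" unfolding key_space_def by (auto simp: PiE_eq_empty_iff)
  have fin: "finite (key_space n X Y)" unfolding key_space_def by (intro finite_PiE finite_key_sets) auto
  have cs: "card (key_space n X Y) = (Y choose X) ^ n"
    unfolding key_space_def by (simp add: card_PiE card_key_sets)
  show ?thesis
    unfolding rkg_dist_def measure_pmf_of_set[OF ne fin] card_event[OF mn] cs by simp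
qed

lemma choose_mono_upper: "a \<le> b \<Longrightarrow> (a choose k) \<le> (b choose k)"
proof -
  assume ab: "a \<le> b"
  have "{B. B \<subseteq> {..<a} \<and> card B = k} \<subseteq> {B. B \<subseteq> {..<b} \<and> card B = k}" using ab by auto
  then have "card {B. B \<subseteq> {..<a} \<and> card B = k} \<le> card {B. B \<subseteq> {..<b} \<and> card B = k}"
    by (rule card_mono[rotated]) auto
  then show ?thesis using n_subsets[of "{..<a}" k] n_subsets[of "{..<b}" k] by simp
qed

definition rr :: "nat \<Rightarrow> nat \<Rightarrow> nat \<Rightarrow> real" where
  "rr X Y a = real ((Y - a) choose X) / real (Y choose X)"

context
  fixes X Y :: nat
  assumes XY: "X \<le> Y" and X1: "1 \<le> X"
begin

lemma Ypos: "Y > 0" using XY X1 by simp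

lemma cpos: "real (Y choose X) > 0" using XY by simp

lemma rr0: "rr X Y 0 = 1" using cpos by (simp add: rr_def)

lemma rrX: "rr X Y X = 1 - rkg_edge_prob X Y" by (simp add: rr_def rkg_edge_prob_def)

lemma rr_nonneg: "rr X Y a \<ge> 0" by (simp add: rr_def)

lemma rr_le1: "rr X Y a \<le> 1"
  using cpos choose_mono_upper[of "Y - a" Y X] by (simp add: rr_def)

lemma rr_submult: "rr X Y (a + b) \<le> rr X Y a * rr X Y b"
proof -
  let ?c = "real (Y choose X)"
  have "real (((Y - a - b) choose X) * (Y choose X)) \<le> real (((Y - a) choose X) * ((Y - b) choose X))"
    using choose_submult[of Y a b X] by (simp only: of_nat_le_iff)
  then have i: "real ((Y - a - b) choose X) * ?c \<le> real ((Y - a) choose X) * real ((Y - b) choose X)"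
    by (simp only: of_nat_mult)
  have c0: "?c > 0" by (rule cpos)
  have "rr X Y (a + b) = real ((Y - a - b) choose X) * ?c / (?c * ?c)"
    unfolding rr_def using c0 by (simp add: diff_diff_add)
  also have "\<dots> \<le> real ((Y - a) choose X) * real ((Y - b) choose X) / (?c * ?c)"
    by (rule divide_right_mono[OF i]) (use c0 in simp)
  also have "\<dots> = rr X Y a * rr X Y b" unfolding rr_def by simp
  finally show ?thesis .
qed

lemma rr_union: "a + b \<le> Y \<Longrightarrow> rr X Y a + rr X Y b \<le> 1 + rr X Y (a + b)"
proof -
  let ?c = "real (Y choose X)"
  assume ab: "a + b \<le> Y"
  have "real (((Y - a) choose X) + ((Y - b) choose X)) \<le> real (((Y - a - b) choose X) + (Y choose X))"
    using choose_union[OF ab, of X] by (simp only: of_nat_le_iff)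
  then have i: "real ((Y - a) choose X) + real ((Y - b) choose X) \<le> real ((Y - a - b) choose X) + ?c"
    by (simp only: of_nat_add)
  have c0: "?c > 0" by (rule cpos)
  have "rr X Y a + rr X Y b = (real ((Y - a) choose X) + real ((Y - b) choose X)) / ?c"
    unfolding rr_def by (simp add: add_divide_distrib)
  also have "\<dots> \<le> (real ((Y - a - b) choose X) + ?c) / ?c"
    by (rule divide_right_mono[OF i]) (use c0 in simp)
  also have "\<dots> = 1 + rr X Y (a + b)" unfolding rr_def using c0 by (simp add: add_divide_distrib diff_diff_add)
  finally show ?thesis .
qed

lemma rr1: "rr X Y 1 = (real Y - real X) / real Y"
proof -
  have "(Y - X) * (Y choose X) = Y * ((Y - 1) choose X)" by (rule binomial_absorb_comp)
  then have e: "real (Y - X) * real (Y choose X) = real Y * real ((Y - 1) choose X)" by (metis of_nat_mult)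
  have Y0: "real Y \<noteq> 0" using Ypos by simp
  have c0: "real (Y choose X) \<noteq> 0" using cpos by simp
  have "rr X Y 1 = real Y * real ((Y - 1) choose X) / (real Y * real (Y choose X))"
    unfolding rr_def using Y0 by simp
  also have "\<dots> = real (Y - X) * real (Y choose X) / (real Y * real (Y choose X))" by (simp only: e)
  also have "\<dots> = real (Y - X) / real Y" using c0 by simp
  also have "real (Y - X) = real Y - real X" using XY by (rule of_nat_diff)
  finally show ?thesis .
qed

lemma rr_pow: "rr X Y (a * i) \<le> rr X Y a ^ i"
proof (induction i)
  case 0 then show ?case by (simp add: rr0)
next
  case (Suc i)
  have "rr X Y (a * Suc i) = rr X Y (a + a * i)" by (simp add: algebra_simps)
  also have "\<dots> \<le> rr X Y a * rr X Y (a * i)" by (rule rr_submult)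
  also have "\<dots> \<le> rr X Y a * rr X Y a ^ i" using Suc rr_nonneg by (simp add: mult_left_mono)
  finally show ?case by simp
qed

lemma q_ge: "rkg_edge_prob X Y \<ge> real X / real Y"
proof -
  have "rr X Y (1 * X) \<le> rr X Y 1 ^ X" by (rule rr_pow)
  also have "\<dots> \<le> rr X Y 1 ^ 1" by (rule power_decreasing) (use X1 rr_nonneg rr_le1 in auto)
  finally have "1 - rkg_edge_prob X Y \<le> (real Y - real X) / real Y" using rrX rr1 by simp
  moreover have "Y > 0" by (rule Ypos)
  ultimately show ?thesis by (simp add: diff_divide_distrib)
qed

lemma rr_upper: "rr X Y (i * X) \<le> (1 - rkg_edge_prob X Y) ^ i"
  using rr_pow[of X i] rrX by (simp add: mult.commute)

lemma rr_lower: "i * X \<le> Y \<Longrightarrow> rr X Y (i * X) \<ge> 1 - real i * rkg_edge_prob X Y"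
proof (induction i)
  case 0 then show ?case by (simp add: rr0)
next
  case (Suc i)
  have "i * X \<le> Y" using Suc.prems by simp
  then have ih: "rr X Y (i * X) \<ge> 1 - real i * rkg_edge_prob X Y" using Suc.IH by simp
  have "rr X Y (i * X) + rr X Y X \<le> 1 + rr X Y (i * X + X)" using Suc.prems by (intro rr_union) simp
  then show ?case using ih rrX by (simp add: algebra_simps)
qed

end

lemma Mf_prod: "Mf h N m = (\<Prod>i<m. (N - i * h) choose h)"
proof (induction m arbitrary: N)
  case 0 then show ?case by simp
next
  case (Suc m)
  have "Mf h N (Suc m) = (N choose h) * (\<Prod>i<m. (N - h - i * h) choose h)" using Suc by simp
  also have "\<dots> = ((N - 0 * h) choose h) * (\<Prod>i<m. (N - Suc i * h) choose h)"
    by (simp add: diff_diff_left)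
  also have "\<dots> = (\<Prod>i<Suc m. (N - i * h) choose h)"
    by (rule prod.lessThan_Suc_shift[symmetric])
  finally show ?case .
qed

lemma real_choose: "real (n choose k) = (\<Prod>t<k. real (n - t)) / fact k"
proof -
  have "real ((n choose k) * fact k) = real (\<Prod>t<k. n - t)" by (simp only: choose_prod)
  then have "real (n choose k) * fact k = (\<Prod>t<k. real (n - t))" by simp
  then show ?thesis by (simp add: field_simps)
qed

lemma lin_ratio: "((\<lambda>n::nat. real (n - c) / real n) \<longlongrightarrow> 1) at_top"
proof -
  have "eventually (\<lambda>n. (real n - real c) / real n = real (n - c) / real n) at_top"
    using eventually_ge_at_top[of c] by eventually_elim (simp add: of_nat_diff)
  moreover have "((\<lambda>n::nat. (real n - real c) / real n) \<longlongrightarrow> 1) at_top" by real_asymp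
  ultimately show ?thesis by (rule Lim_transform_eventually[rotated])
qed

lemma binom_ratio: "((\<lambda>n::nat. real ((n - c) choose h) / (real n ^ h / fact h)) \<longlongrightarrow> 1) at_top"
proof -
  have "eventually (\<lambda>n. (\<Prod>t<h. real (n - (c + t)) / real n) = real ((n - c) choose h) / (real n ^ h / fact h)) at_top"
    using eventually_gt_at_top[of 0]
  proof eventually_elim
    case (elim n)
    have "(\<Prod>t<h. real (n - (c + t)) / real n) = (\<Prod>t<h. real (n - c - t)) / real n ^ h"
      by (simp add: prod_dividef diff_diff_left)
    also have "\<dots> = real ((n - c) choose h) / (real n ^ h / fact h)"
      by (simp add: real_choose field_simps)
    finally show ?case .
  qed
  moreover have "((\<lambda>n::nat. \<Prod>t<h. real (n - (c + t)) / real n) \<longlongrightarrow> (\<Prod>t<h. 1)) at_top"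
    by (intro tendsto_prod lin_ratio)
  ultimately show ?thesis by (simp add: Lim_transform_eventually)
qed

lemma q_facts:
  fixes q \<alpha> :: "nat \<Rightarrow> real" and k :: nat
  assumes k: "k \<ge> 1"
    and qe: "eventually (\<lambda>n. q n = (ln (real n) + (real k - 1) * ln (ln (real n)) + \<alpha> n) / real n) at_top"
    and ao: "\<alpha> \<in> o(\<lambda>n. ln (real n))"
  shows "eventually (\<lambda>n. q n > 0) at_top" "(q \<longlongrightarrow> 0) at_top" "((\<lambda>n. real n * q n ^ 2) \<longlongrightarrow> 0) at_top"
proof -
  have ev_a: "eventually (\<lambda>n. norm (\<alpha> n) \<le> (1/2) * norm (ln (real n))) at_top"
    using landau_o.smallD[OF ao, of "1/2"] by simp
  have ev: "eventually (\<lambda>n. ln (real n) / 2 / real n \<le> q n \<and> q n \<le> (real k + 1) * ln (real n) / real n) at_top"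
    using ev_a qe eventually_ge_at_top[of 3]
  proof eventually_elim
    case (elim n)
    let ?L = "ln (real n)"
    have n3: "real n \<ge> 3" using elim(3) by simp
    have L1: "?L \<ge> 1" using n3 exp_le by (subst ln_ge_iff) auto
    have LL0: "ln ?L \<ge> 0" using L1 by simp
    have LLL: "ln ?L \<le> ?L" using ln_le_minus_one[of ?L] L1 by simp
    have aa: "\<bar>\<alpha> n\<bar> \<le> ?L / 2" using elim(1) L1 by simp
    have k0: "real k - 1 \<ge> 0" using k by simp
    have t1: "(real k - 1) * ln ?L \<ge> 0" using k0 LL0 by simp
    have t2: "(real k - 1) * ln ?L \<le> (real k - 1) * ?L" using LLL k0 by (rule mult_left_mono)
    have lo: "?L / 2 \<le> ?L + (real k - 1) * ln ?L + \<alpha> n" using t1 aa by linarith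
    have hi: "?L + (real k - 1) * ln ?L + \<alpha> n \<le> (real k + 1) * ?L" using t2 aa L1 by (simp add: algebra_simps)
    have np: "real n > 0" using n3 by simp
    have "?L / 2 / real n \<le> (?L + (real k - 1) * ln ?L + \<alpha> n) / real n"
      using lo np by (intro divide_right_mono) auto
    moreover have "(?L + (real k - 1) * ln ?L + \<alpha> n) / real n \<le> (real k + 1) * ?L / real n"
      using hi np by (intro divide_right_mono) auto
    ultimately show ?case using elim(2) by simp
  qed
  show "eventually (\<lambda>n. q n > 0) at_top"
    using ev eventually_ge_at_top[of 3]
  proof eventually_elim
    case (elim n)
    have "ln (real n) > 0" using elim(2) by simp
    then have "ln (real n) / 2 / real n > 0" using elim(2) by simp
    then show ?case using elim(1) by linarith
  qed
  have up0: "((\<lambda>n::nat. (real k + 1) * ln (real n) / real n) \<longlongrightarrow> 0) at_top" by real_asymp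
  show q0: "(q \<longlongrightarrow> 0) at_top"
  proof (rule tendsto_sandwich[OF _ _ tendsto_const up0])
    show "eventually (\<lambda>n. 0 \<le> q n) at_top"
      using ev eventually_ge_at_top[of 1] by eventually_elim (auto intro: order_trans[rotated])
    show "eventually (\<lambda>n. q n \<le> (real k + 1) * ln (real n) / real n) at_top"
      using ev by eventually_elim simp
  qed
  have up1: "((\<lambda>n::nat. real n * ((real k + 1) * ln (real n) / real n) ^ 2) \<longlongrightarrow> 0) at_top" by real_asymp
  show "((\<lambda>n. real n * q n ^ 2) \<longlongrightarrow> 0) at_top"
  proof (rule tendsto_sandwich[OF _ _ tendsto_const up1])
    show "eventually (\<lambda>n. 0 \<le> real n * q n ^ 2) at_top" by simp
    show "eventually (\<lambda>n. real n * q n ^ 2 \<le> real n * ((real k + 1) * ln (real n) / real n) ^ 2) at_top"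
      using ev eventually_ge_at_top[of 1]
    proof eventually_elim
      case (elim n)
      have "0 \<le> ln (real n) / 2 / real n" using elim(2) by simp
      then have "0 \<le> q n" using elim(1) by linarith
      then have "q n ^ 2 \<le> ((real k + 1) * ln (real n) / real n) ^ 2" using elim(1) by (intro power_mono) auto
      then show ?case by (simp add: mult_left_mono)
    qed
  qed
qed

lemma alg1:
  fixes c d M a b :: real
  assumes "c > 0"
  shows "d * (M * (a ^ p * b ^ e)) / (c ^ mm * (c ^ p * c ^ e)) = (d / c ^ mm) * M * (a / c) ^ p * (b / c) ^ e"
  using assms by (simp add: power_divide field_simps)

lemma prob_rr:
  assumes XY: "X \<le> Y" "1 \<le> X" and mn: "m + h * m \<le> n"
  shows "measure_pmf.prob (rkg_dist n X Y) (rkg_event n m h)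
    = (\<Prod>i<m. rr X Y (i * X)) * real (Mf h (n - m) m) * (rr X Y ((m - 1) * X) - rr X Y (m * X)) ^ (h * m)
      * rr X Y (m * X) ^ (n - m - h * m)"
proof -
  let ?c = "real (Y choose X)"
  have c0: "?c > 0" using XY by simp
  have m_le: "m \<le> n" using mn by simp
  have nsplit: "n = m + (h * m + (n - m - h * m))" using mn by simp
  have cn: "?c ^ n = ?c ^ m * (?c ^ (h * m) * ?c ^ (n - m - h * m))"
    by (subst nsplit) (simp only: power_add)
  have A0le: "A0 X Y m \<le> (Y - (m - 1) * X) choose X"
    unfolding A0_def by (rule choose_mono_upper) (simp add: diff_le_mono2 mult_le_mono1)
  have rA1: "real (A1 X Y m) / ?c = rr X Y ((m - 1) * X) - rr X Y (m * X)"
    unfolding A1_def rr_def using A0le by (simp add: of_nat_diff A0_def diff_divide_distrib)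
  have rA0: "real (A0 X Y m) / ?c = rr X Y (m * X)" unfolding A0_def rr_def by simp
  have rD: "real (card (Dis X Y m)) / ?c ^ m = (\<Prod>i<m. rr X Y (i * X))"
    unfolding card_Dis rr_def by (simp add: prod_dividef)
  have "measure_pmf.prob (rkg_dist n X Y) (rkg_event n m h)
     = real (card (Dis X Y m)) * (real (Mf h (n - m) m) * (real (A1 X Y m) ^ (h * m) * real (A0 X Y m) ^ (n - m - h * m)))
       / (?c ^ m * (?c ^ (h * m) * ?c ^ (n - m - h * m)))"
    unfolding prob_formula[OF m_le XY(1)] cn by simp
  also have "\<dots> = (real (card (Dis X Y m)) / ?c ^ m) * real (Mf h (n - m) m)
      * (real (A1 X Y m) / ?c) ^ (h * m) * (real (A0 X Y m) / ?c) ^ (n - m - h * m)"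
    by (rule alg1[OF c0])
  finally show ?thesis unfolding rA1 rA0 rD .
qed

lemma F4_bounds:
  fixes x q :: real and m E d :: nat
  assumes lo: "1 - real m * q \<le> x" and up: "x \<le> (1 - q) ^ m" and q0: "0 \<le> q" and q1: "q \<le> 1"
    and mq: "real m * q \<le> 1/2"
  shows "exp (- 2 * real m ^ 2 * real (E + d) * q ^ 2) \<le> x ^ E / exp (- (real m * real (E + d) * q))"
    and "x ^ E / exp (- (real m * real (E + d) * q)) \<le> exp (real m * q * real d)"
proof -
  have x0: "0 \<le> 1 - real m * q" using mq by simp
  have "x ^ E \<le> ((1 - q) ^ m) ^ E" using lo up x0 by (intro power_mono) auto
  also have "\<dots> \<le> (exp (- q) ^ m) ^ E"
    using q1 by (intro power_mono) (auto simp: add.commute[of 1] exp_ge_add_one_self[of "-q", simplified])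
  also have "\<dots> = exp (- (q * real m * real E))" by (simp add: exp_of_nat_mult[symmetric] power_mult[symmetric] mult_ac)
  finally have xu: "x ^ E \<le> exp (- (q * real m * real E))" .
  have "x ^ E / exp (- (real m * real (E + d) * q)) \<le> exp (- (q * real m * real E)) / exp (- (real m * real (E + d) * q))"
    using xu by (intro divide_right_mono) auto
  also have "\<dots> = exp (real m * q * real d)" by (simp add: exp_diff[symmetric] algebra_simps)
  finally show "x ^ E / exp (- (real m * real (E + d) * q)) \<le> exp (real m * q * real d)" .
  have mq0: "0 \<le> real m * q" using q0 by simp
  have pos: "0 < 1 - real m * q" using mq by simp
  have lnb: "- (real m * q) - 2 * (real m * q)^2 \<le> ln (1 - real m * q)"
    by (rule ln_one_minus_pos_lower_bound[OF mq0 mq])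
  have "0 \<le> 2 * (real m * q)^2" by simp
  then have neg: "- (real m * q) - 2 * (real m * q)^2 \<le> 0" using mq0 by linarith
  have "exp (real (E + d) * (- (real m * q) - 2 * (real m * q)^2)) \<le> exp (real E * (- (real m * q) - 2 * (real m * q)^2))"
    using neg by (simp add: mult_right_mono_neg)
  also have "\<dots> \<le> exp (real E * ln (1 - real m * q))"
    using lnb by (simp add: mult_left_mono)
  also have "\<dots> = (1 - real m * q) ^ E" by (simp only: exp_of_nat_mult exp_ln[OF pos])
  also have "\<dots> \<le> x ^ E" using lo x0 by (intro power_mono) auto
  finally have xl: "exp (real (E + d) * (- (real m * q) - 2 * (real m * q)^2)) \<le> x ^ E" .
  have "exp (- 2 * real m ^ 2 * real (E + d) * q ^ 2)
      = exp (real (E + d) * (- (real m * q) - 2 * (real m * q)^2)) / exp (- (real m * real (E + d) * q))"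
    by (simp add: exp_diff[symmetric] algebra_simps power2_eq_square)
  also have "\<dots> \<le> x ^ E / exp (- (real m * real (E + d) * q))"
    using xl by (intro divide_right_mono) auto
  finally show "exp (- 2 * real m ^ 2 * real (E + d) * q ^ 2) \<le> x ^ E / exp (- (real m * real (E + d) * q))" .
qed

lemma alg2:
  fixes P M D y n q f ex :: real
  assumes "n > 0" "q > 0" "f > 0" "ex > 0"
  shows "(P * M * D ^ p * y) / ((n * q) ^ p / f * ex) = P * (M / (n ^ p / f)) * (D / q) ^ p * (y / ex)"
  using assms by (simp add: power_divide power_mult_distrib field_simps)

theorem mainTheorem9:
  fixes k m h :: nat and X Y :: "nat \<Rightarrow> nat" and \<alpha> :: "nat \<Rightarrow> real"
  assumes "k \<ge> 1" and "m \<ge> 1"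
    and "\<And>n. 1 \<le> X n \<and> X n \<le> Y n"
    and "eventually (\<lambda>n. X n \<ge> 2) at_top"
    and "eventually (\<lambda>n. rkg_edge_prob (X n) (Y n)
            = (ln (real n) + (real k - 1) * ln (ln (real n)) + \<alpha> n) / real n) at_top"
    and "\<alpha> \<in> o(\<lambda>n. ln (real n))"
  shows "(\<lambda>n. measure_pmf.prob (rkg_dist n (X n) (Y n)) (rkg_event n m h))
    \<sim>[at_top] (\<lambda>n. (real n * rkg_edge_prob (X n) (Y n)) ^ (h * m) / (fact h) ^ m
                   * exp (- (real m * real n * rkg_edge_prob (X n) (Y n))))"
proof -
  define q where "q n = rkg_edge_prob (X n) (Y n)" for n
  have qe: "eventually (\<lambda>n. q n = (ln (real n) + (real k - 1) * ln (ln (real n)) + \<alpha> n) / real n) at_top"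
    using assms(5) unfolding q_def .
  note qf = q_facts[OF assms(1) qe assms(6)]
  have XY: "X n \<le> Y n" "1 \<le> X n" for n using assms(3)[of n] by auto
  have m1: "m \<ge> 1" by fact
  have mpos: "real m > 0" using m1 by simp
  have ev_small: "eventually (\<lambda>n. q n < 1 / (2 * real m)) at_top"
    using order_tendstoD(2)[OF qf(2), of "1 / (2 * real m)"] mpos by simp
  have ev: "eventually (\<lambda>n. m + h * m \<le> n \<and> 0 < q n \<and> q n < 1 / (2 * real m) \<and> m * X n \<le> Y n) at_top"
    using eventually_ge_at_top[of "m + h * m"] qf(1) ev_small
  proof eventually_elim
    case (elim n)
    have "real (X n) / real (Y n) \<le> q n" unfolding q_def by (rule q_ge[OF XY])
    then have lt: "real (X n) / real (Y n) < 1 / (2 * real m)" using elim by linarith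
    have Y0: "real (Y n) > 0" using XY[of n] by simp
    have "real (X n) < real (Y n) / (2 * real m)" using lt Y0 by (simp add: divide_less_eq mult.commute)
    then have "real (X n) * (2 * real m) < real (Y n)" using mpos by (simp add: less_divide_eq)
    moreover have "real (X n) * (2 * real m) = 2 * (real m * real (X n))" by simp
    moreover have "0 \<le> real m * real (X n)" by simp
    ultimately have "real m * real (X n) \<le> real (Y n)" by linarith
    then have "real (m * X n) \<le> real (Y n)" by simp
    then have "m * X n \<le> Y n" by (simp only: of_nat_le_iff)
    then show ?case using elim by auto
  qed
  define x where "x n = rr (X n) (Y n) (m * X n)" for n
  define D3 where "D3 n = rr (X n) (Y n) ((m - 1) * X n) - x n" for n
  define P1 where "P1 n = (\<Prod>i<m. rr (X n) (Y n) (i * X n))" for n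
  define F2 where "F2 n = real (Mf h (n - m) m) / (real n ^ (h * m) / fact h ^ m)" for n
  define F4 where "F4 n = x n ^ (n - m - h * m) / exp (- (real m * real n * q n))" for n
  have L1: "(P1 \<longlongrightarrow> 1) at_top"
  proof -
    have "((\<lambda>n. \<Prod>i<m. rr (X n) (Y n) (i * X n)) \<longlongrightarrow> (\<Prod>i<m. (1::real))) at_top"
    proof (rule tendsto_prod)
      fix i assume i: "i \<in> {..<m}"
      have lo: "((\<lambda>n. 1 - real i * q n) \<longlongrightarrow> 1 - real i * 0) at_top"
        by (intro tendsto_intros qf(2))
      show "((\<lambda>n. rr (X n) (Y n) (i * X n)) \<longlongrightarrow> 1) at_top"
      proof (rule tendsto_sandwich[OF _ _ lo[simplified] tendsto_const])
        show "eventually (\<lambda>n. 1 - real i * q n \<le> rr (X n) (Y n) (i * X n)) at_top"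
          using ev
        proof eventually_elim
          case (elim n)
          have "i * X n \<le> m * X n" using i by simp
          then have "i * X n \<le> Y n" using elim by linarith
          then show ?case unfolding q_def by (rule rr_lower[OF XY])
        qed
        show "eventually (\<lambda>n. rr (X n) (Y n) (i * X n) \<le> 1) at_top"
          by (simp add: rr_le1[OF XY])
      qed
    qed
    then show ?thesis unfolding P1_def by simp
  qed
  have L2: "(F2 \<longlongrightarrow> 1) at_top"
  proof -
    have eq: "F2 n = (\<Prod>i<m. real ((n - (m + i * h)) choose h) / (real n ^ h / fact h))" for n
    proof -
      have A: "real (Mf h (n - m) m) = (\<Prod>i<m. real ((n - (m + i * h)) choose h))"
        unfolding Mf_prod by (simp add: diff_diff_left)
      have B: "real n ^ (h * m) / fact h ^ m = (\<Prod>i<m. real n ^ h / fact h)"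
        by (simp add: power_mult power_divide)
      show ?thesis unfolding F2_def A B by (rule prod_dividef[symmetric])
    qed
    have "((\<lambda>n. \<Prod>i<m. real ((n - (m + i * h)) choose h) / (real n ^ h / fact h)) \<longlongrightarrow> (\<Prod>i<m. (1::real))) at_top"
      by (intro tendsto_prod binom_ratio)
    then show ?thesis unfolding eq by simp
  qed
  have L3: "((\<lambda>n. D3 n / q n) \<longlongrightarrow> 1) at_top"
  proof -
    have lo: "((\<lambda>n. 1 - (real m - 1) * q n) \<longlongrightarrow> 1 - (real m - 1) * 0) at_top"
      by (intro tendsto_intros qf(2))
    show ?thesis
    proof (rule tendsto_sandwich[OF _ _ lo[simplified] tendsto_const])
      have b: "eventually (\<lambda>n. (1 - (real m - 1) * q n) * q n \<le> D3 n \<and> D3 n \<le> q n \<and> 0 < q n) at_top"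
        using ev
      proof eventually_elim
        case (elim n)
        have mX: "(m - 1) * X n + X n = m * X n" using m1 by (simp add: algebra_simps le_add_diff_inverse2 mult_eq_if)
        have u: "rr (X n) (Y n) ((m - 1) * X n) + rr (X n) (Y n) (X n) \<le> 1 + rr (X n) (Y n) ((m - 1) * X n + X n)"
          using elim mX by (intro rr_union[OF XY]) simp
        have s: "rr (X n) (Y n) ((m - 1) * X n + X n) \<le> rr (X n) (Y n) ((m - 1) * X n) * rr (X n) (Y n) (X n)"
          by (rule rr_submult[OF XY])
        have rx: "rr (X n) (Y n) (X n) = 1 - q n" unfolding q_def by (rule rrX[OF XY])
        have "(m - 1) * X n \<le> Y n" using elim mX by linarith
        then have l: "1 - real (m - 1) * q n \<le> rr (X n) (Y n) ((m - 1) * X n)"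
          unfolding q_def by (rule rr_lower[OF XY])
        have rm: "real (m - 1) = real m - 1" using m1 by (simp add: of_nat_diff)
        have q0: "0 \<le> q n" using elim by simp
        have "D3 n \<le> q n" using u rx mX unfolding D3_def x_def by simp
        moreover have "D3 n \<ge> rr (X n) (Y n) ((m - 1) * X n) * q n"
          using s rx mX unfolding D3_def x_def by (simp add: algebra_simps)
        moreover have "rr (X n) (Y n) ((m - 1) * X n) * q n \<ge> (1 - (real m - 1) * q n) * q n"
          using l rm q0 by (intro mult_right_mono) simp_all
        ultimately show ?case using elim by linarith
      qed
      show "eventually (\<lambda>n. 1 - (real m - 1) * q n \<le> D3 n / q n) at_top"
        using b by eventually_elim (simp add: pos_le_divide_eq)
      show "eventually (\<lambda>n. D3 n / q n \<le> 1) at_top"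
        using b by eventually_elim simp
    qed
  qed
  have L4: "(F4 \<longlongrightarrow> 1) at_top"
  proof -
    have lo: "((\<lambda>n. exp (- 2 * real m ^ 2 * (real n * q n ^ 2))) \<longlongrightarrow> exp (- 2 * real m ^ 2 * 0)) at_top"
      by (intro tendsto_intros qf(3))
    have up: "((\<lambda>n. exp (real m * q n * real (m + h * m))) \<longlongrightarrow> exp (real m * 0 * real (m + h * m))) at_top"
      by (intro tendsto_intros qf(2))
    have lo': "((\<lambda>n. exp (- 2 * real m ^ 2 * (real n * q n ^ 2))) \<longlongrightarrow> 1) at_top"
      using lo by simp
    have up': "((\<lambda>n. exp (real m * q n * real (m + h * m))) \<longlongrightarrow> 1) at_top"
      using up by simp
    show ?thesis
    proof (rule tendsto_sandwich[OF _ _ lo' up'])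
      have b: "eventually (\<lambda>n. exp (- 2 * real m ^ 2 * (real n * q n ^ 2)) \<le> F4 n \<and> F4 n \<le> exp (real m * q n * real (m + h * m))) at_top"
        using ev
      proof eventually_elim
        case (elim n)
        have nE: "(n - m - h * m) + (m + h * m) = n" using elim by simp
        have "m * X n \<le> Y n" using elim by simp
        then have lo: "1 - real m * q n \<le> x n" unfolding x_def q_def by (rule rr_lower[OF XY])
        have up: "x n \<le> (1 - q n) ^ m" unfolding x_def q_def by (rule rr_upper[OF XY])
        have q0: "0 \<le> q n" using elim by simp
        have "q n < 1 / (2 * real m)" using elim by simp
        then have "q n * (2 * real m) < 1" using mpos by (simp add: less_divide_eq)
        moreover have "q n * (2 * real m) = 2 * (real m * q n)" by simp
        ultimately have mq: "real m * q n \<le> 1/2" by linarith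
        have "1 / (2 * real m) \<le> 1" using m1 by simp
        then have q1: "q n \<le> 1" using elim by linarith
        note B = F4_bounds[OF lo up q0 q1 mq, of "n - m - h * m" "m + h * m"]
        show ?case using B unfolding F4_def nE by (simp add: mult_ac)
      qed
      show "eventually (\<lambda>n. exp (- 2 * real m ^ 2 * (real n * q n ^ 2)) \<le> F4 n) at_top"
        using b by eventually_elim simp
      show "eventually (\<lambda>n. F4 n \<le> exp (real m * q n * real (m + h * m))) at_top"
        using b by eventually_elim simp
    qed
  qed
  have lim: "((\<lambda>n. P1 n * F2 n * (D3 n / q n) ^ (h * m) * F4 n) \<longlongrightarrow> 1 * 1 * 1 ^ (h * m) * 1) at_top"
    by (intro tendsto_intros L1 L2 L3 L4)
  have eqv: "eventually (\<lambda>n. P1 n * F2 n * (D3 n / q n) ^ (h * m) * F4 n =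
      measure_pmf.prob (rkg_dist n (X n) (Y n)) (rkg_event n m h) /
      ((real n * q n) ^ (h * m) / (fact h) ^ m * exp (- (real m * real n * q n)))) at_top"
    using ev
  proof eventually_elim
    case (elim n)
    have n0: "real n > 0" using elim m1 by simp
    have pr: "measure_pmf.prob (rkg_dist n (X n) (Y n)) (rkg_event n m h)
      = P1 n * real (Mf h (n - m) m) * D3 n ^ (h * m) * x n ^ (n - m - h * m)"
      unfolding P1_def D3_def x_def using elim by (intro prob_rr XY) simp
    show ?case unfolding pr F2_def F4_def
      by (rule alg2[symmetric]) (use n0 elim in auto)
  qed
  have "((\<lambda>n. measure_pmf.prob (rkg_dist n (X n) (Y n)) (rkg_event n m h) /
      ((real n * q n) ^ (h * m) / (fact h) ^ m * exp (- (real m * real n * q n)))) \<longlongrightarrow> 1) at_top"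
    using Lim_transform_eventually[OF lim[simplified] eqv] .
  then show ?thesis unfolding q_def by (rule asymp_equivI')
qed

end
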